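(* Let $p$ be an odd prime and let $(G,H,T)$ be the envelope of a right conjugacy closed loop of order $2p$. Let $K$ be a subgroup with $H\lneq K\lneq G$, $|G:K|=2$ and $|K:H|=p$. Let $L\le H$ with $L\trianglelefteq K$. Then for all $a\in G\setminus K$ we have $L\cap L^a=1$ and $LL^a=L\times L^a\trianglelefteq G$.
   Context: For a finite loop $\mathcal{L}$ with identity $e$: $G=\langle R_a\mid a\in\mathcal L\rangle$ with $R_a\colon x\mapsto xa$, $H$ the stabilizer of $e$ in $G$, $T=\{R_a\}$; $(G,H,T)$ is the envelope; the loop is right conjugacy closed if $T$ is a union of conjugacy classes of $G$. *)

theory Defs
  imports "HOL-Algebra.Algebra" "HOL-Computational_Algebra.Primes"
begin

definition is_loop :: "'a set \<Rightarrow> ('a \<Rightarrow> 'a \<Rightarrow> 'a) \<Rightarrow> 'a \<Rightarrow> bool" where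
  "is_loop Q m e \<longleftrightarrow>
     e \<in> Q \<and> (\<forall>x\<in>Q. \<forall>y\<in>Q. m x y \<in> Q) \<and>
     (\<forall>x\<in>Q. m e x = x \<and> m x e = x) \<and>
     (\<forall>a\<in>Q. \<forall>b\<in>Q. \<exists>!x. x \<in> Q \<and> m a x = b) \<and>
     (\<forall>a\<in>Q. \<forall>b\<in>Q. \<exists>!y. y \<in> Q \<and> m y a = b)"

definition rtrans :: "'a set \<Rightarrow> ('a \<Rightarrow> 'a \<Rightarrow> 'a) \<Rightarrow> 'a \<Rightarrow> ('a \<Rightarrow> 'a)" where
  "rtrans Q m a = (\<lambda>x\<in>Q. m x a)"

definition env_T :: "'a set \<Rightarrow> ('a \<Rightarrow> 'a \<Rightarrow> 'a) \<Rightarrow> ('a \<Rightarrow> 'a) set" where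
  "env_T Q m = rtrans Q m ` Q"

definition env_G :: "'a set \<Rightarrow> ('a \<Rightarrow> 'a \<Rightarrow> 'a) \<Rightarrow> ('a \<Rightarrow> 'a) monoid" where
  "env_G Q m = (BijGroup Q)\<lparr>carrier := generate (BijGroup Q) (env_T Q m)\<rparr>"

definition env_H :: "'a set \<Rightarrow> ('a \<Rightarrow> 'a \<Rightarrow> 'a) \<Rightarrow> 'a \<Rightarrow> ('a \<Rightarrow> 'a) set" where
  "env_H Q m e = {g \<in> carrier (env_G Q m). g e = e}"

definition is_RCC_loop :: "'a set \<Rightarrow> ('a \<Rightarrow> 'a \<Rightarrow> 'a) \<Rightarrow> 'a \<Rightarrow> bool" where
  "is_RCC_loop Q m e \<longleftrightarrow> is_loop Q m e \<and>
     (\<forall>g\<in>carrier (env_G Q m). \<forall>t\<in>env_T Q m.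
        g \<otimes>\<^bsub>env_G Q m\<^esub> t \<otimes>\<^bsub>env_G Q m\<^esub> inv\<^bsub>env_G Q m\<^esub> g \<in> env_T Q m)"

end

theory Submission
  imports Defs
begin


context group begin

lemma cancel_l1: "a \<in> carrier G \<Longrightarrow> z \<in> carrier G \<Longrightarrow> inv a \<otimes> (a \<otimes> z) = z"
  by (simp add: m_assoc[symmetric])
lemma cancel_l2: "a \<in> carrier G \<Longrightarrow> z \<in> carrier G \<Longrightarrow> a \<otimes> (inv a \<otimes> z) = z"
  by (simp add: m_assoc[symmetric])

lemma idx2_aux:
  assumes K: "subgroup K G" "card (rcosets K) = 2"
    and g: "g \<in> carrier G" "g \<notin> K" and h: "h \<in> carrier G" "h \<notin> K"
  shows "h \<otimes> inv g \<in> K"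
proof -
  have fin: "finite (rcosets K)" using K(2) by (intro card_ge_0_finite) auto
  have Kc: "K \<subseteq> carrier G" using K(1) subgroup.subset by blast
  have "K #> \<one> \<in> rcosets K" unfolding RCOSETS_def by auto
  hence K1: "K \<in> rcosets K" using coset_mult_one[OF Kc] by simp
  have gK: "K #> g \<in> rcosets K" "K #> h \<in> rcosets K" unfolding RCOSETS_def using g h by auto
  have ng: "K #> g \<noteq> K" using rcos_self[OF g(1) K(1)] g(2) by auto
  have nh: "K #> h \<noteq> K" using rcos_self[OF h(1) K(1)] h(2) by auto
  have eq: "K #> h = K #> g"
  proof (rule ccontr)
    assume ne: "K #> h \<noteq> K #> g"
    have "{K, K#>g, K#>h} \<subseteq> rcosets K" using K1 gK by auto
    hence "card {K, K#>g, K#>h} \<le> 2" using card_mono[OF fin] K(2) by metis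
    moreover have "card {K, K#>g, K#>h} = 3" using ne ng nh by auto
    ultimately show False by simp
  qed
  have "h \<in> K #> g" using rcos_self[OF h(1) K(1)] eq by simp
  then obtain k where k: "k \<in> K" "h = k \<otimes> g" unfolding r_coset_def by auto
  have kc: "k \<in> carrier G" using k(1) Kc by blast
  show ?thesis using g(1) kc k by (simp add: m_assoc)
qed

lemma main_abs:
  assumes K: "subgroup K G" "card (rcosets K) = 2"
    and L: "subgroup L G" "L \<subseteq> K" "L \<lhd> G\<lparr>carrier := K\<rparr>"
    and core: "\<And>n. n \<in> carrier G \<Longrightarrow> (\<And>g. g \<in> carrier G \<Longrightarrow> inv g \<otimes> n \<otimes> g \<in> L) \<Longrightarrow> n = \<one>"
    and a: "a \<in> carrier G" "a \<notin> K"
  shows "let La = (inv a <#\<^bsub>G\<^esub> L) #> a in L \<inter> La = {\<one>} \<and> (\<forall>x\<in>L. \<forall>y\<in>La. x \<otimes> y = y \<otimes> x) \<and> L <#> La \<lhd> G"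
proof -
  have Kc: "K \<subseteq> carrier G" using K(1) subgroup.subset by blast
  have Lc: "L \<subseteq> carrier G" using L(1) subgroup.subset by blast
  have out: "\<And>g h. g\<in>carrier G \<Longrightarrow> g\<notin>K \<Longrightarrow> h\<in>carrier G \<Longrightarrow> h\<notin>K \<Longrightarrow> h \<otimes> inv g \<in> K"
    using idx2_aux[OF K] by blast
  have invK: "\<And>g. g \<in> carrier G \<Longrightarrow> g \<notin> K \<Longrightarrow> inv g \<notin> K"
    by (metis K(1) inv_inv subgroup.m_inv_closed)
  have mulout: "\<And>g h. g\<in>carrier G \<Longrightarrow> g\<notin>K \<Longrightarrow> h\<in>carrier G \<Longrightarrow> h\<notin>K \<Longrightarrow> g \<otimes> h \<in> K"
    by (metis invK out inv_inv inv_closed)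
  have outk: "\<And>g k. g\<in>carrier G \<Longrightarrow> g\<notin>K \<Longrightarrow> k \<in> K \<Longrightarrow> g \<otimes> k \<notin> K"
  proof
    fix g k assume g: "g\<in>carrier G" "g\<notin>K" and k: "k \<in> K" and gk: "g \<otimes> k \<in> K"
    have kc: "k \<in> carrier G" using k Kc by auto
    have "g = (g \<otimes> k) \<otimes> inv k" using g kc by (simp add: m_assoc)
    moreover have "(g \<otimes> k) \<otimes> inv k \<in> K" using gk k K(1) by (simp add: subgroup.m_closed subgroup.m_inv_closed)
    ultimately show False using g by simp
  qed
  have Knorm: "\<And>g k. g\<in>carrier G \<Longrightarrow> k\<in>K \<Longrightarrow> g \<otimes> k \<otimes> inv g \<in> K"
  proof -
    fix g k assume g: "g\<in>carrier G" and k: "k\<in>K"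
    have kc: "k \<in> carrier G" using k Kc by auto
    show "g \<otimes> k \<otimes> inv g \<in> K"
    proof (cases "g \<in> K")
      case True thus ?thesis using k K(1) by (simp add: subgroup.m_closed subgroup.m_inv_closed)
    next
      case False thus ?thesis using mulout[of "g \<otimes> k" "inv g"] outk[OF g False k] invK[OF g False] g kc by simp
    qed
  qed
  have Knorm': "\<And>g k. g\<in>carrier G \<Longrightarrow> k\<in>K \<Longrightarrow> inv g \<otimes> k \<otimes> g \<in> K"
  proof -
    fix g k assume g: "g\<in>carrier G" and k: "k\<in>K"
    from Knorm[OF inv_closed[OF g] k] show "inv g \<otimes> k \<otimes> g \<in> K" using g by simp
  qed
  have Lnorm: "\<And>k l. k\<in>K \<Longrightarrow> l\<in>L \<Longrightarrow> k \<otimes> l \<otimes> inv k \<in> L"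
  proof -
    fix k l assume k: "k \<in> K" and l: "l \<in> L"
    have "k \<otimes>\<^bsub>G\<lparr>carrier := K\<rparr>\<^esub> l \<otimes>\<^bsub>G\<lparr>carrier := K\<rparr>\<^esub> inv\<^bsub>G\<lparr>carrier := K\<rparr>\<^esub> k \<in> L"
      by (rule normal.inv_op_closed2[OF L(3)]) (use k l in auto)
    thus "k \<otimes> l \<otimes> inv k \<in> L" using m_inv_consistent[OF K(1) k] by simp
  qed
  have Lnorm': "\<And>k l. k\<in>K \<Longrightarrow> l\<in>L \<Longrightarrow> inv k \<otimes> l \<otimes> k \<in> L"
  proof -
    fix k l assume k: "k \<in> K" and l: "l \<in> L"
    have kc: "k \<in> carrier G" using k Kc by blast
    have "inv k \<otimes> l \<otimes> inv (inv k) \<in> L" by (rule Lnorm[OF subgroup.m_inv_closed[OF K(1) k] l])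
    thus "inv k \<otimes> l \<otimes> k \<in> L" by (simp only: inv_inv[OF kc])
  qed
  define La where "La = (inv a <#\<^bsub>G\<^esub> L) #> a"
  have La_iff: "\<And>y. y \<in> La \<longleftrightarrow> (\<exists>l\<in>L. y = inv a \<otimes> l \<otimes> a)"
    unfolding La_def r_coset_def l_coset_def by auto
  have La_intro: "\<And>l. l \<in> L \<Longrightarrow> inv a \<otimes> l \<otimes> a \<in> La" using La_iff by blast
  have Lac: "La \<subseteq> carrier G" using La_iff Lc a by (auto intro!: m_closed)
  have LaK: "La \<subseteq> K"
  proof
    fix y assume "y \<in> La"
    then obtain l where "l \<in> L" "y = inv a \<otimes> l \<otimes> a" using La_iff by blast
    thus "y \<in> K" using Knorm'[OF a(1), of l] L(2) by auto
  qed
  have La_conj: "\<And>u l. u \<in> K \<Longrightarrow> l \<in> L \<Longrightarrow> inv a \<otimes> (u \<otimes> l \<otimes> inv u) \<otimes> a \<in> La"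
    using La_iff Lnorm by blast
  have aa: "a \<otimes> a \<in> K" using mulout a by blast
  have p1: "L \<inter> La = {\<one>}"
  proof
    show "{\<one>} \<subseteq> L \<inter> La" using La_iff L(1) a subgroup.one_closed by fastforce
  next
    show "L \<inter> La \<subseteq> {\<one>}"
    proof
      fix n assume n: "n \<in> L \<inter> La"
      then obtain l where l: "l \<in> L" "n = inv a \<otimes> l \<otimes> a" using La_iff by blast
      have lc: "l \<in> carrier G" using l Lc by auto
      have "n = \<one>"
      proof (rule core)
        show "n \<in> carrier G" using n Lc by auto
      next
        fix g assume g: "g \<in> carrier G"
        show "inv g \<otimes> n \<otimes> g \<in> L"
        proof (cases "g \<in> K")
          case True thus ?thesis using Lnorm' n by auto
        next
          case False
          define k where "k = inv a \<otimes> g"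
          have k: "k \<in> K" unfolding k_def using mulout[of "inv a" g] invK a g False by simp
          have kc: "k \<in> carrier G" using k Kc by auto
          have geq: "g = a \<otimes> k" unfolding k_def using a g by (simp add: m_assoc[symmetric])
          have "inv g \<otimes> n \<otimes> g = inv k \<otimes> (inv (a\<otimes>a) \<otimes> l \<otimes> (a\<otimes>a)) \<otimes> k"
            using geq l a kc lc by (simp add: m_assoc inv_mult_group cancel_l1 cancel_l2)
          thus ?thesis using Lnorm' Lnorm' aa k l by simp
        qed
      qed
      thus "n \<in> {\<one>}" by simp
    qed
  qed
  have p2: "\<forall>x\<in>L. \<forall>y\<in>La. x \<otimes> y = y \<otimes> x"
  proof (intro ballI)
    fix x y assume x: "x \<in> L" and y: "y \<in> La"
    then obtain l where l: "l \<in> L" "y = inv a \<otimes> l \<otimes> a" using La_iff by blast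
    have xc: "x \<in> carrier G" using x Lc by auto
    have yc: "y \<in> carrier G" using y Lac by auto
    have lc: "l \<in> carrier G" using l Lc by auto
    have yK: "y \<in> K" using y LaK by auto
    define c where "c = x \<otimes> y \<otimes> inv x \<otimes> inv y"
    have "c = x \<otimes> (y \<otimes> inv x \<otimes> inv y)" unfolding c_def using xc yc by (simp add: m_assoc)
    moreover have "y \<otimes> inv x \<otimes> inv y \<in> L" using Lnorm[OF yK] x L(1) by (simp add: subgroup.m_inv_closed)
    ultimately have cL: "c \<in> L" using x L(1) by (simp add: subgroup.m_closed)
    define u where "u = a \<otimes> x \<otimes> inv a"
    have uK: "u \<in> K" unfolding u_def using Knorm a x L(2) by auto
    have uc: "u \<in> carrier G" using uK Kc by auto
    have "c = inv a \<otimes> ((u \<otimes> l \<otimes> inv u) \<otimes> inv l) \<otimes> a"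
      unfolding c_def u_def using l a xc lc by (simp add: m_assoc inv_mult_group cancel_l1 cancel_l2)
    moreover have "(u \<otimes> l \<otimes> inv u) \<otimes> inv l \<in> L" using Lnorm[OF uK l(1)] l L(1)
      by (simp add: subgroup.m_closed subgroup.m_inv_closed)
    ultimately have "c \<in> La" using La_iff by blast
    hence "c = \<one>" using cL p1 by auto
    have "x \<otimes> y = c \<otimes> y \<otimes> x" unfolding c_def using xc yc by (simp add: m_assoc)
    thus "x \<otimes> y = y \<otimes> x" using \<open>c = \<one>\<close> xc yc by simp
  qed
  have La_mult: "\<And>y1 y2. y1 \<in> La \<Longrightarrow> y2 \<in> La \<Longrightarrow> y1 \<otimes> y2 \<in> La"
  proof -
    fix y1 y2 assume "y1 \<in> La" "y2 \<in> La"
    then obtain l1 l2 where l: "l1 \<in> L" "y1 = inv a \<otimes> l1 \<otimes> a" "l2 \<in> L" "y2 = inv a \<otimes> l2 \<otimes> a"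
      using La_iff by meson
    have lc: "l1 \<in> carrier G" "l2 \<in> carrier G" using l Lc by blast+
    have "y1 \<otimes> y2 = inv a \<otimes> (l1 \<otimes> l2) \<otimes> a" using l a lc by (simp add: m_assoc cancel_l1 cancel_l2)
    thus "y1 \<otimes> y2 \<in> La" using La_intro[OF subgroup.m_closed[OF L(1) l(1) l(3)]] by simp
  qed
  have La_inv: "\<And>y. y \<in> La \<Longrightarrow> inv y \<in> La"
  proof -
    fix y assume "y \<in> La"
    then obtain l where l: "l \<in> L" "y = inv a \<otimes> l \<otimes> a" using La_iff by meson
    have lc: "l \<in> carrier G" using l Lc by blast
    have "inv y = inv a \<otimes> inv l \<otimes> a" using l a lc by (simp add: m_assoc inv_mult_group cancel_l1 cancel_l2)
    thus "inv y \<in> La" using La_intro[OF subgroup.m_inv_closed[OF L(1) l(1)]] by simp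
  qed
  have LLa_iff: "\<And>h. h \<in> L <#> La \<longleftrightarrow> (\<exists>x\<in>L. \<exists>y\<in>La. h = x \<otimes> y)"
    unfolding set_mult_def by auto
  have LLa_intro: "\<And>x y. x \<in> L \<Longrightarrow> y \<in> La \<Longrightarrow> x \<otimes> y \<in> L <#> La"
    unfolding set_mult_def by blast
  have sub: "subgroup (L <#> La) G"
  proof (rule subgroupI)
    show "L <#> La \<subseteq> carrier G" using LLa_iff Lc Lac by (auto intro!: m_closed)
  next
    have "\<one> \<in> L \<inter> La" using p1 by simp
    hence "\<one> \<otimes> \<one> \<in> L <#> La" using LLa_intro by blast
    thus "L <#> La \<noteq> {}" by blast
  next
    fix h assume "h \<in> L <#> La"
    then obtain x y where xy: "x \<in> L" "y \<in> La" "h = x \<otimes> y" using LLa_iff by blast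
    have xc: "x \<in> carrier G" "y \<in> carrier G" using xy Lc Lac by blast+
    have ix: "inv x \<in> L" by (rule subgroup.m_inv_closed[OF L(1) xy(1)])
    have iy: "inv y \<in> La" by (rule La_inv[OF xy(2)])
    have "inv h = inv y \<otimes> inv x" using xy xc by (simp add: inv_mult_group)
    also have "\<dots> = inv x \<otimes> inv y" by (rule p2[rule_format, OF ix iy, symmetric])
    finally have "inv h = inv x \<otimes> inv y" .
    thus "inv h \<in> L <#> La" using LLa_intro[OF ix iy] by simp
  next
    fix h1 h2 assume "h1 \<in> L <#> La" "h2 \<in> L <#> La"
    obtain x1 y1 where xy1: "x1 \<in> L" "y1 \<in> La" "h1 = x1 \<otimes> y1" using LLa_iff \<open>h1 \<in> L <#> La\<close> by blast
    obtain x2 y2 where xy2: "x2 \<in> L" "y2 \<in> La" "h2 = x2 \<otimes> y2" using LLa_iff \<open>h2 \<in> L <#> La\<close> by blast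
    note xy = xy1 xy2
    have c: "x1 \<in> carrier G" "x2 \<in> carrier G" "y1 \<in> carrier G" "y2 \<in> carrier G" using xy Lc Lac by auto
    have "h1 \<otimes> h2 = x1 \<otimes> (y1 \<otimes> x2) \<otimes> y2" using xy c by (simp add: m_assoc)
    also have "\<dots> = x1 \<otimes> (x2 \<otimes> y1) \<otimes> y2" by (simp only: p2[rule_format, OF xy(4) xy(2), symmetric])
    also have "\<dots> = (x1 \<otimes> x2) \<otimes> (y1 \<otimes> y2)" using c by (simp add: m_assoc)
    finally show "h1 \<otimes> h2 \<in> L <#> La"
      using LLa_intro[OF subgroup.m_closed[OF L(1) xy(1) xy(4)] La_mult[OF xy(2) xy(5)]] by simp
  qed
  have conjL2: "\<And>g x. x \<in> L \<Longrightarrow> g \<in> K \<Longrightarrow> g \<otimes> x \<otimes> inv g \<in> L"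
    using Lnorm by blast
  have "L <#> La \<lhd> G"
    unfolding normal_inv_iff
  proof (intro conjI sub ballI)
    fix g h assume g: "g \<in> carrier G" and h: "h \<in> L <#> La"
    then obtain x y where xy: "x \<in> L" "y \<in> La" "h = x \<otimes> y" using LLa_iff by meson
    have c: "x \<in> carrier G" "y \<in> carrier G" using xy Lc Lac by auto
    have eq: "g \<otimes> h \<otimes> inv g = (g \<otimes> x \<otimes> inv g) \<otimes> (g \<otimes> y \<otimes> inv g)"
      using xy c g by (simp add: m_assoc cancel_l1 cancel_l2)
    show "g \<otimes> h \<otimes> inv g \<in> L <#> La"
    proof (cases "g \<in> K")
      case True
      have "g \<otimes> y \<otimes> inv g \<in> La"
      proof -
        obtain l where l: "l \<in> L" "y = inv a \<otimes> l \<otimes> a" using La_iff xy by meson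
        have lc: "l \<in> carrier G" using l Lc by auto
        define u where "u = a \<otimes> g \<otimes> inv a"
        have uK: "u \<in> K" unfolding u_def using Knorm a True by auto
        have "g \<otimes> y \<otimes> inv g = inv a \<otimes> (u \<otimes> l \<otimes> inv u) \<otimes> a"
          unfolding u_def using a g lc l by (simp add: m_assoc inv_mult_group cancel_l1 cancel_l2)
        thus ?thesis using La_conj[OF uK l(1)] by simp
      qed
      thus ?thesis using eq LLa_intro[OF conjL2[OF xy(1) True]] by simp
    next
      case False
      have A: "g \<otimes> x \<otimes> inv g \<in> La"
      proof -
        define w where "w = a \<otimes> g"
        have wK: "w \<in> K" unfolding w_def using mulout a g False by auto
        have "g \<otimes> x \<otimes> inv g = inv a \<otimes> (w \<otimes> x \<otimes> inv w) \<otimes> a"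
          unfolding w_def using a g c by (simp add: m_assoc inv_mult_group cancel_l1 cancel_l2)
        thus ?thesis using La_conj[OF wK xy(1)] by simp
      qed
      have B: "g \<otimes> y \<otimes> inv g \<in> L"
      proof -
        obtain l where l: "l \<in> L" "y = inv a \<otimes> l \<otimes> a" using La_iff xy by meson
        have lc: "l \<in> carrier G" using l Lc by auto
        define v where "v = g \<otimes> inv a"
        have vK: "v \<in> K" unfolding v_def using out a g False by auto
        have "g \<otimes> y \<otimes> inv g = v \<otimes> l \<otimes> inv v"
          unfolding v_def using a g lc l by (simp add: m_assoc inv_mult_group cancel_l1 cancel_l2)
        thus ?thesis using Lnorm[OF vK l(1)] by simp
      qed
      have "g \<otimes> h \<otimes> inv g = (g \<otimes> y \<otimes> inv g) \<otimes> (g \<otimes> x \<otimes> inv g)"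
        using eq p2 A B by simp
      thus ?thesis using LLa_intro[OF B A] by simp
    qed
  qed
  thus ?thesis using p1 p2 unfolding La_def Let_def by simp
qed

end


lemma loopD1: assumes "is_loop Q m e" shows "e \<in> Q"
  using assms unfolding is_loop_def by (elim conjE) assumption

lemma loopD2: assumes "is_loop Q m e" shows "\<forall>x\<in>Q. \<forall>y\<in>Q. m x y \<in> Q"
  using assms unfolding is_loop_def by (elim conjE) assumption

lemma loopD3: assumes "is_loop Q m e" shows "\<forall>x\<in>Q. m e x = x \<and> m x e = x"
  using assms unfolding is_loop_def by (elim conjE) assumption

lemma loopD4: assumes "is_loop Q m e" shows "\<forall>a\<in>Q. \<forall>b\<in>Q. \<exists>!y. y \<in> Q \<and> m y a = b"
  using assms unfolding is_loop_def by (elim conjE) assumption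

lemma rtrans_Bij:
  assumes "is_loop Q m e" "a \<in> Q"
  shows "rtrans Q m a \<in> Bij Q"
proof -
  have cl: "\<And>x. x \<in> Q \<Longrightarrow> m x a \<in> Q" using loopD2[OF assms(1)] assms(2) by simp
  have uq: "\<And>b. b \<in> Q \<Longrightarrow> \<exists>!y. y \<in> Q \<and> m y a = b" using loopD4[OF assms(1)] assms(2) by simp
  have inj: "inj_on (rtrans Q m a) Q"
  proof (rule inj_onI)
    fix x y assume xy: "x \<in> Q" "y \<in> Q" "rtrans Q m a x = rtrans Q m a y"
    hence eq: "m x a = m y a" by (simp add: rtrans_def)
    from uq[OF cl[OF xy(1)]] obtain z where z: "z \<in> Q \<and> m z a = m x a"
      and u: "\<And>w. w \<in> Q \<and> m w a = m x a \<Longrightarrow> w = z" by (elim ex1E) blast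
    have "x = z" using u xy(1) by blast
    moreover have "y = z" using u xy(2) eq by simp
    ultimately show "x = y" by simp
  qed
  have "rtrans Q m a ` Q = Q"
  proof
    show "rtrans Q m a ` Q \<subseteq> Q" using cl by (auto simp: rtrans_def)
  next
    show "Q \<subseteq> rtrans Q m a ` Q"
    proof
      fix b assume "b \<in> Q"
      from uq[OF this] obtain y where "y \<in> Q" "m y a = b" by (elim ex1E) blast
      thus "b \<in> rtrans Q m a ` Q" by (force simp: rtrans_def)
    qed
  qed
  thus ?thesis using inj unfolding Bij_def bij_betw_def rtrans_def by auto
qed

lemma env_sub:
  assumes "is_loop Q m e"
  shows "subgroup (carrier (env_G Q m)) (BijGroup Q)"
proof -
  have "env_T Q m \<subseteq> carrier (BijGroup Q)"
    using rtrans_Bij[OF assms] by (auto simp: env_T_def BijGroup_def)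
  thus ?thesis unfolding env_G_def
    using group.generate_is_subgroup[OF group_BijGroup] by simp
qed

lemma env_group:
  assumes "is_loop Q m e"
  shows "group (env_G Q m)"
proof -
  have "group ((BijGroup Q)\<lparr>carrier := carrier (env_G Q m)\<rparr>)"
    using subgroup.subgroup_is_group[OF env_sub[OF assms] group_BijGroup] .
  thus ?thesis by (simp add: env_G_def)
qed

lemma env_mult:
  assumes "f \<in> Bij Q" "g \<in> Bij Q"
  shows "f \<otimes>\<^bsub>env_G Q m\<^esub> g = compose Q f g"
  using assms by (simp add: env_G_def BijGroup_def)

lemma env_core:
  assumes loop: "is_loop Q m e" and n: "n \<in> carrier (env_G Q m)"
    and H: "\<And>g. g \<in> carrier (env_G Q m) \<Longrightarrow>
       inv\<^bsub>env_G Q m\<^esub> g \<otimes>\<^bsub>env_G Q m\<^esub> n \<otimes>\<^bsub>env_G Q m\<^esub> g \<in> env_H Q m e"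
  shows "n = \<one>\<^bsub>env_G Q m\<^esub>"
proof -
  interpret G0: group "env_G Q m" using env_group[OF loop] .
  have sub: "carrier (env_G Q m) \<subseteq> Bij Q"
    using subgroup.subset[OF env_sub[OF loop]] by (simp add: BijGroup_def)
  have eQ: "e \<in> Q" by (rule loopD1[OF loop])
  have fix_pt: "n x = x" if x: "x \<in> Q" for x
  proof -
    define r where "r = rtrans Q m x"
    have rc: "r \<in> carrier (env_G Q m)" unfolding r_def env_G_def
      using x by (auto simp: env_T_def intro: generate.incl)
    define h where "h = inv\<^bsub>env_G Q m\<^esub> r \<otimes>\<^bsub>env_G Q m\<^esub> n \<otimes>\<^bsub>env_G Q m\<^esub> r"
    have hH: "h \<in> env_H Q m e" unfolding h_def using H[OF rc] .
    hence hc: "h \<in> carrier (env_G Q m)" and he: "h e = e" by (auto simp: env_H_def)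
    have "r \<otimes>\<^bsub>env_G Q m\<^esub> h = n \<otimes>\<^bsub>env_G Q m\<^esub> r"
      unfolding h_def using rc n by (simp add: G0.m_assoc[symmetric])
    hence "compose Q r h e = compose Q n r e"
      using env_mult sub rc hc n by (metis subsetD)
    hence "r (h e) = n (r e)" using eQ by (simp add: compose_def)
    moreover have "r e = x" using loopD3[OF loop] x eQ unfolding r_def rtrans_def by simp
    ultimately show "n x = x" using he by simp
  qed
  have "n = (\<lambda>x\<in>Q. x)"
    by (rule extensionalityI[of _ Q]) (use n sub fix_pt in \<open>auto simp: Bij_def\<close>)
  thus ?thesis by (simp add: env_G_def BijGroup_def)
qed

theorem lemma5p2:
  fixes Q :: "'a set" and m :: "'a \<Rightarrow> 'a \<Rightarrow> 'a" and e :: 'a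
    and p :: nat and K L :: "('a \<Rightarrow> 'a) set"
  assumes "Factorial_Ring.prime p" and "odd p"
    and "is_RCC_loop Q m e" and "finite Q" and "card Q = 2 * p"
    and "subgroup K (env_G Q m)"
    and "env_H Q m e \<subset> K" and "K \<subset> carrier (env_G Q m)"
    and "card (rcosets\<^bsub>env_G Q m\<^esub> K) = 2"
    and "card (rcosets\<^bsub>(env_G Q m)\<lparr>carrier := K\<rparr>\<^esub> (env_H Q m e)) = p"
    and "subgroup L (env_G Q m)" and "L \<subseteq> env_H Q m e"
    and "L \<lhd> (env_G Q m)\<lparr>carrier := K\<rparr>"
  shows "\<forall>a \<in> carrier (env_G Q m) - K.
           (let La = (inv\<^bsub>env_G Q m\<^esub> a <#\<^bsub>env_G Q m\<^esub> L) #>\<^bsub>env_G Q m\<^esub> a in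
              L \<inter> La = {\<one>\<^bsub>env_G Q m\<^esub>}
            \<and> (\<forall>x\<in>L. \<forall>y\<in>La. x \<otimes>\<^bsub>env_G Q m\<^esub> y = y \<otimes>\<^bsub>env_G Q m\<^esub> x)
            \<and> L <#>\<^bsub>env_G Q m\<^esub> La \<lhd> env_G Q m)"
proof -
  have loop: "is_loop Q m e" using assms(3) unfolding is_RCC_loop_def by blast
  interpret G0: group "env_G Q m" using env_group[OF loop] .
  have LK: "L \<subseteq> K" using assms(12,7) by blast
  show ?thesis
  proof
    fix a assume a: "a \<in> carrier (env_G Q m) - K"
    show "let La = (inv\<^bsub>env_G Q m\<^esub> a <#\<^bsub>env_G Q m\<^esub> L) #>\<^bsub>env_G Q m\<^esub> a in
              L \<inter> La = {\<one>\<^bsub>env_G Q m\<^esub>}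
            \<and> (\<forall>x\<in>L. \<forall>y\<in>La. x \<otimes>\<^bsub>env_G Q m\<^esub> y = y \<otimes>\<^bsub>env_G Q m\<^esub> x)
            \<and> L <#>\<^bsub>env_G Q m\<^esub> La \<lhd> env_G Q m"
    proof (rule G0.main_abs[OF assms(6) assms(9) assms(11) LK assms(13)])
      fix n assume n: "n \<in> carrier (env_G Q m)"
        and c: "\<And>g. g \<in> carrier (env_G Q m) \<Longrightarrow>
            inv\<^bsub>env_G Q m\<^esub> g \<otimes>\<^bsub>env_G Q m\<^esub> n \<otimes>\<^bsub>env_G Q m\<^esub> g \<in> L"
      show "n = \<one>\<^bsub>env_G Q m\<^esub>"
      proof (rule env_core[OF loop n])
        fix g assume "g \<in> carrier (env_G Q m)"
        from c[OF this] show "inv\<^bsub>env_G Q m\<^esub> g \<otimes>\<^bsub>env_G Q m\<^esub> n \<otimes>\<^bsub>env_G Q m\<^esub> g \<in> env_H Q m e"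
          using assms(12) by (rule subsetD[rotated])
      qed
    next
      show "a \<in> carrier (env_G Q m)" using a by (rule DiffD1)
    next
      show "a \<notin> K" using a by simp
    qed
  qed
qed

end
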